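(* Let $\mathcal C,\mathcal D\subseteq\{0,1\}^n$ be neural codes and $q:\mathcal C\to\mathcal D$ a code map, with pullback ring homomorphism $\phi_q:R_\mathcal D\to R_\mathcal C$, $\phi_q(f)=f\circ q$. Then $\phi_q$ is an $R[n]$-module homomorphism if and only if $q$ is an inclusion map, i.e. $q(c)=c$ for all $c\in\mathcal C$ (so $\mathcal C\subseteq\mathcal D$); and $\phi_q$ is an $R[n]$-module isomorphism if and only if $\mathcal C=\mathcal D$ and $q$ is the identity.
   Context: For a code $\mathcal C\subseteq\{0,1\}^n$, $R_\mathcal C$ is the ring of all functions $\mathcal C\to\mathbb F_2$ (equivalently $\mathbb F_2[x_1,\dots,x_n]$ modulo the ideal of polynomials vanishing on $\mathcal C$). $R[n]=\mathbb F_2[x_1,\dots,x_n]/\langle x_i^2-x_i: i\in[n]\rangle$, and $R_\mathcal C$ is an $R[n]$-module via $(r\cdot f)(c)=r(c)f(c)$ for $c\in\mathcal C$. A code map is any function $q:\mathcal C\to\mathcal D$. *)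

theory Defs
  imports Main "HOL-Library.Z2"
begin

(* Codewords of length n: bool lists of length n (True = 1).
   F_2 is the field 'bit' from HOL-Library.Z2. *)

definition neural_code :: "nat \<Rightarrow> bool list set \<Rightarrow> bool" where
  "neural_code n C \<longleftrightarrow> (\<forall>c\<in>C. length c = n)"

(* R[n]: Boolean functions {0,1}^n -> F_2 (canonically F_2[x]/<x_i^2-x_i>),
   represented as functions vanishing outside {0,1}^n. *)
definition Rn :: "nat \<Rightarrow> (bool list \<Rightarrow> bit) set" where
  "Rn n = {r. \<forall>x. length x \<noteq> n \<longrightarrow> r x = 0}"

(* R_C: all functions C -> F_2, represented as functions vanishing outside C *)
definition RC :: "bool list set \<Rightarrow> (bool list \<Rightarrow> bit) set" where
  "RC C = {f. \<forall>x. x \<notin> C \<longrightarrow> f x = 0}"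

definition act :: "(bool list \<Rightarrow> bit) \<Rightarrow> (bool list \<Rightarrow> bit) \<Rightarrow> (bool list \<Rightarrow> bit)" where
  "act r f = (\<lambda>c. r c * f c)"

definition code_map :: "bool list set \<Rightarrow> bool list set \<Rightarrow> (bool list \<Rightarrow> bool list) \<Rightarrow> bool" where
  "code_map C D q \<longleftrightarrow> (\<forall>c\<in>C. q c \<in> D)"

definition pullback :: "bool list set \<Rightarrow> (bool list \<Rightarrow> bool list) \<Rightarrow> (bool list \<Rightarrow> bit) \<Rightarrow> (bool list \<Rightarrow> bit)" where
  "pullback C q f = (\<lambda>c. if c \<in> C then f (q c) else 0)"

definition Rn_module_hom :: "nat \<Rightarrow> bool list set \<Rightarrow> bool list set \<Rightarrow> ((bool list \<Rightarrow> bit) \<Rightarrow> (bool list \<Rightarrow> bit)) \<Rightarrow> bool" where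
  "Rn_module_hom n D C \<phi> \<longleftrightarrow>
     (\<forall>f\<in>RC D. \<phi> f \<in> RC C) \<and>
     (\<forall>f\<in>RC D. \<forall>g\<in>RC D. \<phi> (\<lambda>x. f x + g x) = (\<lambda>x. \<phi> f x + \<phi> g x)) \<and>
     (\<forall>r\<in>Rn n. \<forall>f\<in>RC D. \<phi> (act r f) = act r (\<phi> f))"

definition Rn_module_iso :: "nat \<Rightarrow> bool list set \<Rightarrow> bool list set \<Rightarrow> ((bool list \<Rightarrow> bit) \<Rightarrow> (bool list \<Rightarrow> bit)) \<Rightarrow> bool" where
  "Rn_module_iso n D C \<phi> \<longleftrightarrow> Rn_module_hom n D C \<phi> \<and> bij_betw \<phi> (RC D) (RC C)"

end

theory Submission
  imports Defs
begin

lemma hom_iff: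
  assumes "neural_code n C" and "neural_code n D" and "code_map C D q"
  shows "Rn_module_hom n D C (pullback C q) \<longleftrightarrow> (\<forall>c\<in>C. q c = c)"
proof
  assume h: "Rn_module_hom n D C (pullback C q)"
  show "\<forall>c\<in>C. q c = c"
  proof (rule ccontr)
    assume "\<not> (\<forall>c\<in>C. q c = c)"
    then obtain c where c: "c \<in> C" "q c \<noteq> c" by blast
    have qD: "q c \<in> D" using assms(3) c by (simp add: code_map_def)
    define f :: "bool list \<Rightarrow> bit" where "f = (\<lambda>x. if x = q c then 1 else 0)"
    have fR: "f \<in> RC D" using qD by (auto simp: RC_def f_def)
    have rR: "f \<in> Rn n" using qD assms(2) by (auto simp: Rn_def f_def neural_code_def)
    have "pullback C q (act f f) = act f (pullback C q f)"
      using h fR rR by (simp add: Rn_module_hom_def)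
    hence "pullback C q (act f f) c = act f (pullback C q f) c" by simp
    thus False using c by (simp add: pullback_def act_def f_def)
  qed
next
  assume idq: "\<forall>c\<in>C. q c = c"
  have pb: "pullback C q f = (\<lambda>c. if c \<in> C then f c else 0)" for f
    using idq by (auto simp: pullback_def)
  show "Rn_module_hom n D C (pullback C q)"
    unfolding Rn_module_hom_def pb by (auto simp: RC_def act_def)
qed

theorem lemma4:
  fixes n :: nat and C D :: "bool list set" and q :: "bool list \<Rightarrow> bool list"
  assumes "neural_code n C" and "neural_code n D" and "code_map C D q"
  shows "(Rn_module_hom n D C (pullback C q) \<longleftrightarrow> (\<forall>c\<in>C. q c = c))
       \<and> (Rn_module_iso n D C (pullback C q) \<longleftrightarrow> (C = D \<and> (\<forall>c\<in>C. q c = c)))"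
proof -
  have H: "Rn_module_hom n D C (pullback C q) \<longleftrightarrow> (\<forall>c\<in>C. q c = c)"
    using hom_iff[OF assms] .
  have I: "Rn_module_iso n D C (pullback C q) \<longleftrightarrow> (C = D \<and> (\<forall>c\<in>C. q c = c))"
  proof
    assume iso: "Rn_module_iso n D C (pullback C q)"
    hence idq: "\<forall>c\<in>C. q c = c" using H by (simp add: Rn_module_iso_def)
    have CD: "C \<subseteq> D" using idq assms(3) by (auto simp: code_map_def)
    have inj: "inj_on (pullback C q) (RC D)" using iso by (simp add: Rn_module_iso_def bij_betw_def)
    have "D \<subseteq> C"
    proof
      fix d assume d: "d \<in> D"
      show "d \<in> C"
      proof (rule ccontr)
        assume nd: "d \<notin> C"
        define f :: "bool list \<Rightarrow> bit" where "f = (\<lambda>x. if x = d then 1 else 0)"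
        have fR: "f \<in> RC D" using d by (auto simp: RC_def f_def)
        have zR: "(\<lambda>x. 0) \<in> RC D" by (simp add: RC_def)
        have "pullback C q f = pullback C q (\<lambda>x. 0)"
          using idq nd by (auto simp: pullback_def f_def)
        hence "f = (\<lambda>x. 0)" using inj fR zR by (meson inj_onD)
        hence "f d = 0" by simp
        thus False by (simp add: f_def)
      qed
    qed
    thus "C = D \<and> (\<forall>c\<in>C. q c = c)" using CD idq by blast
  next
    assume a: "C = D \<and> (\<forall>c\<in>C. q c = c)"
    hence hom: "Rn_module_hom n D C (pullback C q)" using H by simp
    have pb: "\<forall>f\<in>RC D. pullback C q f = f"
      using a by (auto simp: pullback_def RC_def)
    have "bij_betw (pullback C q) (RC D) (RC C)"
    proof -
      have "bij_betw id (RC D) (RC C)" using a by simp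
      thus ?thesis using pb bij_betw_cong[of "RC D" "pullback C q" id "RC C"] by simp
    qed
    thus "Rn_module_iso n D C (pullback C q)" using hom by (simp add: Rn_module_iso_def)
  qed
  show ?thesis using H I by simp
qed

end
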